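(* Let $n,N\in\mathbb N$, $I=\{1,\dots,n\}$, $J=\{1,\dots,N\}$, and let $a=(a_{ij})\in\mathbb R^{n\times N}$. Let $G$ be a nonempty finite set of maps from $I$ to $J$, and let $C_G>0$ be a constant depending only on $G$. Assume that for all $i\in I$, $j\in J$ and all pairs $(i_1,j_1)\neq(i_2,j_2)$ in $I\times J$: (i) $\mathbb P(\{g\in G: g(i)=j\})=1/N$; (ii) $\mathbb P(\{g\in G: g(i_1)=j_1,\ g(i_2)=j_2\})\le C_G/N^2$. Then for every integer $1\le \ell\le n$, $$\frac{c}{N}\sum_{j=1}^{\ell N}s(j)\;\le\;\int_G\sum_{k=1}^{\ell}\operatorname{k\text{-}max}_{1\le i\le n}|a_{i g(i)}|\,d\mathbb P(g)\;\le\;\frac{2}{N}\sum_{j=1}^{\ell N}s(j),$$ where $c=2^{-5}(1+2C_G)^{-2}$.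
   Context: $\mathbb P$ denotes the normalized counting measure on $G$, i.e. $\mathbb P(E)=|E|/|G|$ for $E\subseteq G$. $(s(k))_{k=1}^{nN}$ is the non-increasing rearrangement of the $nN$ numbers $(|a_{ij}|)_{i\in I,j\in J}$ (so $s(1)$ is the largest). For a vector $x\in\mathbb R^n$ with non-negative entries, $\operatorname{k\text{-}max}_{1\le i\le n}x_i$ denotes the $k$-th largest entry of $x$ counted with multiplicity, i.e. the $k$-th entry of the non-increasing rearrangement of $x$. *)

theory Defs
  imports Complex_Main "HOL-Library.FuncSet"
begin

definition Pc :: "'a set \<Rightarrow> 'a set \<Rightarrow> real" where
  "Pc G E = real (card E) / real (card G)"

definition avg :: "'a set \<Rightarrow> ('a \<Rightarrow> real) \<Rightarrow> real" where
  "avg G f = (\<Sum>g\<in>G. f g) / real (card G)"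

definition kth_largest :: "real list \<Rightarrow> nat \<Rightarrow> real" where
  "kth_largest xs k = rev (sort xs) ! (k - 1)"

definition kmax :: "nat \<Rightarrow> nat \<Rightarrow> (nat \<Rightarrow> real) \<Rightarrow> real" where
  "kmax k n x = kth_largest (map x [1..<n+1]) k"

definition srearr :: "nat \<Rightarrow> nat \<Rightarrow> (nat \<Rightarrow> nat \<Rightarrow> real) \<Rightarrow> nat \<Rightarrow> real" where
  "srearr n N a k = kth_largest (concat (map (\<lambda>i. map (\<lambda>j. \<bar>a i j\<bar>) [1..<N+1]) [1..<n+1])) k"

end

theory Submission
  imports Defs "HOL-Library.Multiset"
begin

lemma top_sum_shift: "(\<Sum>k=1..m. kth_largest xs k) = (\<Sum>k<m. rev (sort xs) ! k)"
  by (induction m) (auto simp: kth_largest_def)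

lemma desc_nth:
  assumes "i \<le> j" "j < length xs"
  shows "rev (sort xs) ! j \<le> rev (sort (xs::real list)) ! i"
proof -
  have "sorted (sort xs)" by simp
  then show ?thesis using assms
    by (simp add: rev_nth sorted_nth_mono)
qed

lemma sum_rev_sort: "sum_list (map f (rev (sort (xs::real list)))) = sum_list (map (f::real\<Rightarrow>real) xs)"
proof -
  have "sum_list (map f (rev (sort xs))) = sum_mset (mset (map f (rev (sort xs))))"
    by (simp only: sum_mset_sum_list)
  also have "\<dots> = sum_mset (mset (map f xs))" by simp
  finally show ?thesis by (simp only: sum_mset_sum_list)
qed

lemma top_le:
  assumes "m \<le> length xs"
  shows "(\<Sum>k=1..m. kth_largest xs k) \<le> real m * t + sum_list (map (\<lambda>v. max 0 (v - t)) xs)"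
proof -
  let ?ys = "rev (sort xs)"
  let ?f = "\<lambda>v. max 0 (v - t)"
  have "(\<Sum>k<m. ?ys ! k) \<le> (\<Sum>k<m. t + ?f (?ys!k))"
    by (intro sum_mono) auto
  also have "\<dots> = real m * t + (\<Sum>k<m. ?f (?ys!k))" by (simp add: sum.distrib)
  also have "(\<Sum>k<m. ?f (?ys!k)) \<le> (\<Sum>k<length xs. ?f (?ys!k))"
    using assms by (intro sum_mono2) auto
  also have "(\<Sum>k<length xs. ?f (?ys!k)) = sum_list (map ?f ?ys)"
    by (simp add: sum_list_sum_nth atLeast0LessThan)
  finally show ?thesis unfolding top_sum_shift by (simp only: sum_rev_sort)
qed

lemma top_eq:
  assumes "1 \<le> m" "m \<le> length xs"
  shows "(\<Sum>k=1..m. kth_largest xs k) = real m * kth_largest xs m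
     + sum_list (map (\<lambda>v. max 0 (v - kth_largest xs m)) xs)"
proof -
  let ?ys = "rev (sort xs)"
  define t where "t = kth_largest xs m"
  have t: "t = ?ys ! (m - 1)" by (simp add: t_def kth_largest_def)
  let ?f = "\<lambda>v. max 0 (v - t)"
  have "(\<Sum>k<m. ?ys ! k) = (\<Sum>k<m. t + ?f (?ys!k))"
  proof (intro sum.cong refl)
    fix k assume "k \<in> {..<m}"
    then have "t \<le> ?ys ! k" unfolding t using assms by (intro desc_nth) auto
    then show "?ys ! k = t + ?f (?ys!k)" by simp
  qed
  also have "\<dots> = real m * t + (\<Sum>k<m. ?f (?ys!k))" by (simp add: sum.distrib)
  also have "(\<Sum>k<m. ?f (?ys!k)) = (\<Sum>k<length xs. ?f (?ys!k))"
  proof (rule sum.mono_neutral_left)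
    show "\<forall>i\<in>{..<length xs} - {..<m}. ?f (?ys ! i) = 0"
    proof
      fix i assume "i \<in> {..<length xs} - {..<m}"
      then have "?ys ! i \<le> t" unfolding t using assms by (intro desc_nth) auto
      then show "?f (?ys ! i) = 0" by simp
    qed
  qed (use assms in auto)
  also have "(\<Sum>k<length xs. ?f (?ys!k)) = sum_list (map ?f ?ys)"
    by (simp add: sum_list_sum_nth atLeast0LessThan)
  finally show ?thesis unfolding top_sum_shift t_def[symmetric] by (simp only: sum_rev_sort)
qed

lemma kth_nonneg:
  assumes "\<forall>v\<in>set xs. 0 \<le> v" "1 \<le> k" "k \<le> length xs"
  shows "0 \<le> kth_largest xs k"
proof -
  have "rev (sort xs) ! (k-1) \<in> set (rev (sort xs))" using assms by (intro nth_mem) auto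
  then show ?thesis using assms by (auto simp: kth_largest_def)
qed


lemma sum_list_upt_map: "sum_list (map f (map x [1..<n+1])) = (\<Sum>i=1..n. f (x i))"
proof -
  have "sum_list (map f (map x [1..<n+1])) = sum_list (map (f \<circ> x) [1..<n+1])" by simp
  also have "\<dots> = sum (f \<circ> x) (set [1..<n+1])" by (rule sum_list_distinct_conv_sum_set) simp
  also have "set [1..<n+1] = {1..n}" by auto
  finally show ?thesis by simp
qed

lemma kmax_up:
  assumes "l \<le> n"
  shows "(\<Sum>k=1..l. kmax k n x) \<le> real l * t + (\<Sum>i=1..n. max 0 (x i - t))"
  using top_le[of l "map x [1..<n+1]" t] assms
  unfolding kmax_def sum_list_upt_map by simp

lemma kmax_low:
  assumes "1 \<le> l" "l \<le> n" "\<And>i. i \<in> {1..n} \<Longrightarrow> 0 \<le> x i"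
    and "\<And>i. i \<in> {1..n} \<Longrightarrow> 0 \<le> c i \<and> c i \<le> 1" "(\<Sum>i=1..n. c i) \<le> real l"
  shows "(\<Sum>i=1..n. c i * x i) \<le> (\<Sum>k=1..l. kmax k n x)"
proof -
  define t where "t = kth_largest (map x [1..<n+1]) l"
  have t0: "0 \<le> t" unfolding t_def using assms by (intro kth_nonneg) auto
  have eq: "(\<Sum>k=1..l. kmax k n x) = real l * t + (\<Sum>i=1..n. max 0 (x i - t))"
    using top_eq[of l "map x [1..<n+1]"] assms
    unfolding kmax_def sum_list_upt_map t_def by simp
  have "(\<Sum>i=1..n. c i * x i) \<le> (\<Sum>i=1..n. c i * t + max 0 (x i - t))"
  proof (intro sum_mono)
    fix i assume i: "i \<in> {1..n}"
    have "c i * x i \<le> c i * (t + max 0 (x i - t))"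
      using assms(4)[OF i] by (intro mult_left_mono) auto
    also have "\<dots> \<le> c i * t + max 0 (x i - t)"
      using assms(4)[OF i] by (simp add: algebra_simps mult_left_le_one_le)
    finally show "c i * x i \<le> c i * t + max 0 (x i - t)" .
  qed
  also have "\<dots> = (\<Sum>i=1..n. c i) * t + (\<Sum>i=1..n. max 0 (x i - t))"
    by (simp add: sum.distrib sum_distrib_right)
  also have "\<dots> \<le> real l * t + (\<Sum>i=1..n. max 0 (x i - t))"
    using assms(5) t0 by (simp add: mult_right_mono)
  finally show ?thesis using eq by simp
qed

definition pos_list :: "nat \<Rightarrow> nat \<Rightarrow> (nat \<times> nat) list" where
  "pos_list n N = List.product [1..<n+1] [1..<N+1]"

lemma zs_eq: "concat (map (\<lambda>i. map (\<lambda>j. \<bar>a i j\<bar>) [1..<N+1]) [1..<n+1])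
   = map (\<lambda>p. \<bar>a (fst p) (snd p)\<bar>) (pos_list n N)"
  by (simp add: pos_list_def product_concat_map map_concat comp_def)

lemma pos_list_props: "distinct (pos_list n N)" "set (pos_list n N) = {1..n} \<times> {1..N}"
  "length (pos_list n N) = n * N"
  by (auto simp: pos_list_def distinct_product atLeastLessThanSuc_atLeastAtMost)

lemma sum_pos_list: "sum_list (map f (map w (pos_list n N))) = (\<Sum>p\<in>{1..n}\<times>{1..N}. f (w p))"
  using pos_list_props[of n N] by (simp add: sum_list_distinct_conv_sum_set)

lemma top_set:
  fixes w :: "'a \<Rightarrow> real"
  assumes "distinct ps" "m \<le> length ps"
  shows "\<exists>A. A \<subseteq> set ps \<and> card A = m \<and> (\<Sum>p\<in>A. w p) = (\<Sum>k=1..m. kth_largest (map w ps) k)"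
proof -
  have so: "sort (map w ps) = map w (sort_key w ps)"
    by (rule properties_for_sort) (simp_all add: mset_map)
  define qs where "qs = rev (sort_key w ps)"
  have dq: "distinct qs" using assms by (simp add: qs_def)
  have lq: "length qs = length ps" by (simp add: qs_def)
  define A where "A = set (take m qs)"
  have "A \<subseteq> set ps" by (auto simp: A_def qs_def dest: in_set_takeD)
  moreover have "card A = m" unfolding A_def using dq assms lq
    by (simp add: distinct_card)
  moreover have "(\<Sum>p\<in>A. w p) = (\<Sum>k=1..m. kth_largest (map w ps) k)"
  proof -
    have "(\<Sum>p\<in>A. w p) = sum_list (map w (take m qs))"
      unfolding A_def using dq by (simp add: sum_list_distinct_conv_sum_set)
    also have "\<dots> = (\<Sum>k<m. map w qs ! k)"
      using assms lq by (simp add: sum_list_sum_nth atLeast0LessThan min_def take_map[symmetric])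
    also have "map w qs = rev (sort (map w ps))" by (simp add: so qs_def rev_map)
    finally show ?thesis unfolding top_sum_shift .
  qed
  ultimately show ?thesis by blast
qed


lemma beta_ineq:
  fixes H l \<alpha> :: real
  assumes "0 \<le> H" "0 < l" "0 < \<alpha>" "\<alpha> \<le> 1"
  shows "\<alpha> - \<alpha>^2 * H / (4*l) \<le> (if H \<le> l then 1 else l / H)"
proof (cases "H \<le> l")
  case True
  have "0 \<le> \<alpha>^2 * H / (4*l)" using assms by simp
  moreover have "(if H \<le> l then 1 else l / H) = (1::real)" using True by simp
  ultimately show ?thesis using assms by linarith
next
  case False
  then have H: "0 < H" using assms by simp
  have sq: "0 \<le> (2*l - \<alpha>*H)^2" by simp
  have e1: "(\<alpha> - \<alpha>^2 * H / (4*l)) * (4*l*H) = 4*\<alpha>*l*H - \<alpha>^2*H^2"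
    using H assms by (simp add: field_simps power2_eq_square)
  have e2: "l / H * (4*l*H) = 4*l^2"
    using H assms by (simp add: field_simps power2_eq_square)
  have "4*\<alpha>*l*H - \<alpha>^2*H^2 \<le> 4*l^2" using sq by (simp add: power2_eq_square algebra_simps)
  then have "(\<alpha> - \<alpha>^2 * H / (4*l)) * (4*l*H) \<le> l / H * (4*l*H)" using e1 e2 by simp
  then have "\<alpha> - \<alpha>^2 * H / (4*l) \<le> l / H"
  proof -
    have "0 < 4*l*H" using H assms by simp
    then show ?thesis using \<open>(\<alpha> - \<alpha>^2 * H / (4*l)) * (4*l*H) \<le> l / H * (4*l*H)\<close>
      using mult_le_cancel_right_pos by blast
  qed
  then show ?thesis using False by simp
qed

lemma final_const:
  fixes C l :: real
  assumes "0 < C" "1 \<le> l"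
  shows "1 / (2^5 * (1 + 2 * C)^2) \<le> 1/(1+C) - (1/(1+C))^2 * (1 + l*C) / (4*l)"
proof -
  define \<alpha> where "\<alpha> = 1/(1+C)"
  have a0: "0 < \<alpha>" using assms by (simp add: \<alpha>_def)
  have "(1 + l*C) / (4*l) \<le> (1+C)/4" using assms by (simp add: field_simps)
  hence "\<alpha>^2 * ((1 + l*C) / (4*l)) \<le> \<alpha>^2 * ((1+C)/4)" by (intro mult_left_mono) auto
  also have "\<alpha>^2 * ((1+C)/4) = \<alpha>/4"
  proof -
    have "\<alpha>*(1+C) = 1" using assms by (simp add: \<alpha>_def)
    then show ?thesis by (simp add: power2_eq_square)
  qed
  finally have 1: "\<alpha> - \<alpha>^2 * (1 + l*C) / (4*l) \<ge> 3/4*\<alpha>" by simp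
  have "(1+C) \<le> 24 * (1 + 2*C)^2" using assms by (simp add: power2_eq_square algebra_simps)
  hence "1 / (2^5 * (1 + 2 * C)^2) \<le> 3/4*\<alpha>" using assms
    by (simp add: \<alpha>_def field_simps)
  with 1 show ?thesis by (simp add: \<alpha>_def)
qed


theorem theorem1p1:
  fixes n N :: nat and a :: "nat \<Rightarrow> nat \<Rightarrow> real"
    and G :: "(nat \<Rightarrow> nat) set" and C :: real and l :: nat
  assumes G_maps: "G \<subseteq> {1..n} \<rightarrow>\<^sub>E {1..N}"
    and G_ne: "G \<noteq> {}"
    and C_pos: "C > 0"
    and cond1: "\<And>i j. i \<in> {1..n} \<Longrightarrow> j \<in> {1..N} \<Longrightarrow>
                 Pc G {g \<in> G. g i = j} = 1 / real N"
    and cond2: "\<And>i1 j1 i2 j2. i1 \<in> {1..n} \<Longrightarrow> j1 \<in> {1..N} \<Longrightarrow>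
                 i2 \<in> {1..n} \<Longrightarrow> j2 \<in> {1..N} \<Longrightarrow> (i1, j1) \<noteq> (i2, j2) \<Longrightarrow>
                 Pc G {g \<in> G. g i1 = j1 \<and> g i2 = j2} \<le> C / (real N)^2"
    and l_range: "1 \<le> l" "l \<le> n"
  shows "(1 / (2^5 * (1 + 2 * C)^2)) / real N * (\<Sum>j=1..l*N. srearr n N a j)
           \<le> avg G (\<lambda>g. \<Sum>k=1..l. kmax k n (\<lambda>i. \<bar>a i (g i)\<bar>))
       \<and> avg G (\<lambda>g. \<Sum>k=1..l. kmax k n (\<lambda>i. \<bar>a i (g i)\<bar>))
           \<le> 2 / real N * (\<Sum>j=1..l*N. srearr n N a j)"
proof -
  have n1: "1 \<le> n" using l_range by simp
  have finG: "finite G" by (rule finite_subset[OF G_maps]) (intro finite_PiE; simp)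
  obtain g0 where g0: "g0 \<in> G" using G_ne by auto
  have gmap: "g i \<in> {1..N}" if "g \<in> G" "i \<in> {1..n}" for g i
    using G_maps that by (auto simp: PiE_def Pi_def)
  have "g0 1 \<in> {1..N}" using gmap[OF g0] n1 by simp
  hence N1: "1 \<le> N" by simp
  hence Npos: "0 < real N" by simp
  define K where "K = real (card G)"
  have Kpos: "0 < K" using finG G_ne by (simp add: K_def card_gt_0_iff)
  define chi :: "(nat \<Rightarrow> nat) \<Rightarrow> nat \<times> nat \<Rightarrow> real"
    where "chi g p = (if g (fst p) = snd p then 1 else 0)" for g p
  have chi01: "0 \<le> chi g p" "chi g p * chi g p = chi g p" for g p by (auto simp: chi_def)
  have S1: "(\<Sum>g\<in>G. chi g p) = K / N" if p: "p \<in> {1..n} \<times> {1..N}" for p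
  proof -
    have "(\<Sum>g\<in>G. chi g p) = real (card {g\<in>G. g (fst p) = snd p})"
      unfolding chi_def using finG by (simp add: sum.If_cases Int_def)
    moreover have "real (card {g\<in>G. g (fst p) = snd p}) / K = 1 / N"
      using cond1[of "fst p" "snd p"] p unfolding Pc_def K_def by auto
    ultimately show ?thesis using Kpos Npos by (auto simp: field_simps)
  qed
  have S2: "(\<Sum>g\<in>G. chi g p * chi g q) \<le> C * K / (real N)^2"
    if p: "p \<in> {1..n} \<times> {1..N}" and q: "q \<in> {1..n} \<times> {1..N}" and pq: "p \<noteq> q" for p q
  proof -
    have "(\<Sum>g\<in>G. chi g p * chi g q) = (\<Sum>g\<in>G. if g (fst p) = snd p \<and> g (fst q) = snd q then 1 else 0)"
      unfolding chi_def by (intro sum.cong refl) auto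
    also have "\<dots> = real (card {g\<in>G. g (fst p) = snd p \<and> g (fst q) = snd q})"
      using finG by (simp add: sum.If_cases Int_def)
    finally have "(\<Sum>g\<in>G. chi g p * chi g q) = real (card {g\<in>G. g (fst p) = snd p \<and> g (fst q) = snd q})" .
    moreover have "real (card {g\<in>G. g (fst p) = snd p \<and> g (fst q) = snd q}) / K \<le> C / (real N)^2"
      using cond2[of "fst p" "snd p" "fst q" "snd q"] p q pq unfolding Pc_def K_def
      by (auto simp: prod_eq_iff)
    ultimately show ?thesis using Kpos Npos by (auto simp: field_simps)
  qed
  have D: "(\<Sum>g\<in>G. h (g i)) = K / N * (\<Sum>j\<in>{1..N}. h j)" if i: "i \<in> {1..n}" for i and h :: "nat \<Rightarrow> real"
  proof -
    have "(\<Sum>g\<in>G. h (g i)) = (\<Sum>g\<in>G. \<Sum>j\<in>{1..N}. chi g (i,j) * h j)"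
    proof (intro sum.cong refl)
      fix g assume "g \<in> G"
      then have "g i \<in> {1..N}" using gmap i by blast
      then show "h (g i) = (\<Sum>j\<in>{1..N}. chi g (i,j) * h j)"
      proof -
        have "(\<Sum>j\<in>{1..N}. chi g (i,j) * h j) = (\<Sum>j\<in>{1..N}. if g i = j then h j else 0)"
          by (intro sum.cong refl) (simp add: chi_def)
        also have "\<dots> = h (g i)" using \<open>g i \<in> {1..N}\<close> by (simp add: sum.delta)
        finally show ?thesis by simp
      qed
    qed
    also have "\<dots> = (\<Sum>j\<in>{1..N}. (\<Sum>g\<in>G. chi g (i,j)) * h j)"
      by (subst sum.swap) (simp add: sum_distrib_right)
    also have "\<dots> = (\<Sum>j\<in>{1..N}. K / N * h j)"
      using i by (intro sum.cong refl) (simp add: S1)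
    finally show ?thesis by (simp add: sum_distrib_left)
  qed
  define w where "w p = \<bar>a (fst p) (snd p)\<bar>" for p
  define ps where "ps = pos_list n N"
  define T where "T g = (\<Sum>k=1..l. kmax k n (\<lambda>i. \<bar>a i (g i)\<bar>))" for g
  define m where "m = l * N"
  define S where "S = (\<Sum>j=1..l*N. srearr n N a j)"
  have zs: "concat (map (\<lambda>i. map (\<lambda>j. \<bar>a i j\<bar>) [1..<N+1]) [1..<n+1]) = map w ps"
    unfolding ps_def w_def by (rule zs_eq)
  have S_def2: "S = (\<Sum>k=1..m. kth_largest (map w ps) k)"
    unfolding S_def m_def srearr_def zs ..
  have lenps: "length (map w ps) = n * N" by (simp add: ps_def pos_list_props)
  have mle: "m \<le> n * N" using l_range by (simp add: m_def)
  have m1: "1 \<le> m" using l_range N1 by (simp add: m_def)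
  have S0: "0 \<le> S" unfolding S_def2
    by (intro sum_nonneg kth_nonneg) (use lenps mle in \<open>auto simp: w_def\<close>)
  have avgT: "avg G (\<lambda>g. \<Sum>k=1..l. kmax k n (\<lambda>i. \<bar>a i (g i)\<bar>)) = (\<Sum>g\<in>G. T g) / K"
    by (simp add: avg_def T_def K_def)
  have cart: "(\<Sum>p\<in>{1..n}\<times>{1..N}. F p) = (\<Sum>i\<in>{1..n}. \<Sum>j\<in>{1..N}. F (i,j))" for F :: "nat \<times> nat \<Rightarrow> real"
    by (simp add: sum.cartesian_product)
  define \<sigma> where "\<sigma> = kth_largest (map w ps) m"
  have Seq: "S = real m * \<sigma> + (\<Sum>i\<in>{1..n}. \<Sum>j\<in>{1..N}. max 0 (\<bar>a i j\<bar> - \<sigma>))"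
  proof -
    have "S = real m * \<sigma> + sum_list (map (\<lambda>v. max 0 (v - \<sigma>)) (map w ps))"
      unfolding S_def2 \<sigma>_def using m1 mle lenps by (intro top_eq) auto
    also have "sum_list (map (\<lambda>v. max 0 (v - \<sigma>)) (map w ps)) = (\<Sum>p\<in>{1..n}\<times>{1..N}. max 0 (w p - \<sigma>))"
      unfolding ps_def by (rule sum_pos_list)
    finally show ?thesis using cart[of "\<lambda>p. max 0 (w p - \<sigma>)"] by (simp add: w_def)
  qed
  have up: "(\<Sum>g\<in>G. T g) \<le> K * S / N"
  proof -
    have "(\<Sum>g\<in>G. T g) \<le> (\<Sum>g\<in>G. real l * \<sigma> + (\<Sum>i=1..n. max 0 (\<bar>a i (g i)\<bar> - \<sigma>)))"
      unfolding T_def using l_range by (intro sum_mono kmax_up) auto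
    also have "\<dots> = K * (real l * \<sigma>) + (\<Sum>i=1..n. \<Sum>g\<in>G. max 0 (\<bar>a i (g i)\<bar> - \<sigma>))"
      by (simp add: sum.distrib K_def sum.swap[of _ G])
    also have "(\<Sum>i=1..n. \<Sum>g\<in>G. max 0 (\<bar>a i (g i)\<bar> - \<sigma>)) = (\<Sum>i=1..n. K / N * (\<Sum>j\<in>{1..N}. max 0 (\<bar>a i j\<bar> - \<sigma>)))"
      by (intro sum.cong refl D) 
    also have "\<dots> = K / N * (S - real m * \<sigma>)" using Seq by (simp add: sum_distrib_left)
    also have "K * (real l * \<sigma>) + K / N * (S - real m * \<sigma>) = K * S / N"
      using Npos by (simp add: m_def field_simps)
    finally show ?thesis .
  qed
  have upper: "(\<Sum>g\<in>G. T g) / K \<le> 2 / real N * S"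
  proof -
    have "(\<Sum>g\<in>G. T g) / K \<le> S / N" using up Kpos by (simp add: field_simps)
    also have "\<dots> \<le> 2 / real N * S" using S0 Npos by (simp add: field_simps)
    finally show ?thesis .
  qed
  obtain A where A: "A \<subseteq> {1..n}\<times>{1..N}" "card A = m" "(\<Sum>p\<in>A. w p) = S"
    using top_set[of ps m w] pos_list_props[of n N] mle unfolding S_def2 ps_def by auto
  have finA: "finite A" using A(1) finite_subset by blast
  define \<alpha> :: real where "\<alpha> = 1 / (1 + C)"
  have a0: "0 < \<alpha>" "\<alpha> \<le> 1" using C_pos by (auto simp: \<alpha>_def)
  define H where "H g = (\<Sum>q\<in>A. chi g q)" for g
  define Y where "Y g = (\<Sum>p\<in>A. chi g p * w p)" for g
  define \<beta> where "\<beta> g = (if H g \<le> real l then 1 else real l / H g)" for g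
  have conv: "(\<Sum>i\<in>{1..n}. if (i, g i) \<in> A then F (i, g i) else 0) = (\<Sum>p\<in>A. chi g p * F p)"
    for g and F :: "nat \<times> nat \<Rightarrow> real"
  proof -
    have "(\<Sum>p\<in>A. chi g p * F p) = (\<Sum>p\<in>A. \<Sum>i\<in>{1..n}. if p = (i, g i) then F p else 0)"
    proof (intro sum.cong refl)
      fix p assume "p \<in> A"
      then have fp: "fst p \<in> {1..n}" using A(1) by auto
      have "(\<Sum>i\<in>{1..n}. if p = (i, g i) then F p else 0)
          = (\<Sum>i\<in>{1..n}. if i = fst p then (if g (fst p) = snd p then F p else 0) else 0)"
        by (intro sum.cong refl) (auto simp: prod_eq_iff)
      also have "\<dots> = (if g (fst p) = snd p then F p else 0)" using fp by simp
      finally show "chi g p * F p = (\<Sum>i\<in>{1..n}. if p = (i, g i) then F p else 0)"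
        by (simp add: chi_def)
    qed
    also have "\<dots> = (\<Sum>i\<in>{1..n}. \<Sum>p\<in>A. if p = (i, g i) then F p else 0)" by (rule sum.swap)
    also have "\<dots> = (\<Sum>i\<in>{1..n}. if (i, g i) \<in> A then F (i, g i) else 0)"
      using finA by (intro sum.cong refl) (simp add: sum.delta)
    finally show ?thesis ..
  qed
  have Tlow: "\<alpha> * Y g - \<alpha>^2 / (4 * real l) * (\<Sum>p\<in>A. \<Sum>q\<in>A. chi g p * chi g q * w p) \<le> T g"
    if g: "g \<in> G" for g
  proof -
    have H0: "0 \<le> H g" unfolding H_def by (intro sum_nonneg) (simp add: chi01)
    have Y0: "0 \<le> Y g" unfolding Y_def by (intro sum_nonneg) (simp add: chi01 w_def)
    have b01: "0 \<le> \<beta> g \<and> \<beta> g \<le> 1" using H0 l_range by (auto simp: \<beta>_def)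
    define c where "c i = (if (i, g i) \<in> A then \<beta> g else 0)" for i
    have "(\<Sum>i\<in>{1..n}. c i) = (\<Sum>p\<in>A. chi g p * \<beta> g)" unfolding c_def by (rule conv)
    also have "\<dots> = \<beta> g * H g" by (simp add: H_def sum_distrib_left mult.commute)
    also have "\<dots> \<le> real l" using H0 l_range by (auto simp: \<beta>_def)
    finally have csum: "(\<Sum>i\<in>{1..n}. c i) \<le> real l" .
    have "(\<Sum>i=1..n. c i * \<bar>a i (g i)\<bar>) \<le> T g"
      unfolding T_def using l_range b01 by (intro kmax_low[OF _ _ _ _ csum]) (auto simp: c_def)
    moreover have "(\<Sum>i=1..n. c i * \<bar>a i (g i)\<bar>) = \<beta> g * Y g"
    proof -
      have "(\<Sum>i=1..n. c i * \<bar>a i (g i)\<bar>) = (\<Sum>i\<in>{1..n}. if (i, g i) \<in> A then \<beta> g * w (i, g i) else 0)"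
        by (intro sum.cong refl) (simp add: c_def w_def)
      also have "\<dots> = (\<Sum>p\<in>A. chi g p * (\<beta> g * w p))" by (rule conv)
      also have "\<dots> = \<beta> g * Y g" by (simp add: Y_def sum_distrib_left algebra_simps)
      finally show ?thesis .
    qed
    moreover have "(\<alpha> - \<alpha>^2 * H g / (4 * real l)) * Y g \<le> \<beta> g * Y g"
      using beta_ineq[of "H g" "real l" \<alpha>] H0 l_range a0 Y0
      by (intro mult_right_mono) (auto simp: \<beta>_def)
    moreover have "H g * Y g = (\<Sum>p\<in>A. \<Sum>q\<in>A. chi g p * chi g q * w p)"
    proof -
      have "H g * Y g = (\<Sum>q\<in>A. \<Sum>p\<in>A. chi g q * (chi g p * w p))"
        unfolding H_def Y_def by (rule sum_product)
      also have "\<dots> = (\<Sum>p\<in>A. \<Sum>q\<in>A. chi g q * (chi g p * w p))" by (rule sum.swap)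
      also have "\<dots> = (\<Sum>p\<in>A. \<Sum>q\<in>A. chi g p * chi g q * w p)"
        by (intro sum.cong refl) (simp add: algebra_simps)
      finally show ?thesis .
    qed
    ultimately have t1: "(\<alpha> - \<alpha>^2 * H g / (4 * real l)) * Y g \<le> T g"
      and t2: "H g * Y g = (\<Sum>p\<in>A. \<Sum>q\<in>A. chi g p * chi g q * w p)" by linarith+
    have "\<alpha> * Y g - \<alpha>^2 / (4 * real l) * (\<Sum>p\<in>A. \<Sum>q\<in>A. chi g p * chi g q * w p)
       = (\<alpha> - \<alpha>^2 * H g / (4 * real l)) * Y g"
      unfolding t2[symmetric] by (simp add: algebra_simps)
    with t1 show ?thesis by simp
  qed
  have sumY: "(\<Sum>g\<in>G. Y g) = K * S / N"
  proof -
    have "(\<Sum>g\<in>G. Y g) = (\<Sum>p\<in>A. (\<Sum>g\<in>G. chi g p) * w p)"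
      unfolding Y_def by (subst sum.swap) (simp add: sum_distrib_right)
    also have "\<dots> = (\<Sum>p\<in>A. K / N * w p)"
      using A(1) by (intro sum.cong refl) (auto simp: S1)
    also have "\<dots> = K / N * (\<Sum>p\<in>A. w p)" by (rule sum_distrib_left[symmetric])
    also have "\<dots> = K * S / N" using A(3) by simp
    finally show ?thesis .
  qed
  have sumQ: "(\<Sum>g\<in>G. \<Sum>p\<in>A. \<Sum>q\<in>A. chi g p * chi g q * w p) \<le> K * S * (1 + real l * C) / N"
  proof -
    have per: "(\<Sum>q\<in>A. \<Sum>g\<in>G. chi g p * chi g q) \<le> K / N + real m * (C * K / (real N)^2)" if p: "p \<in> A" for p
    proof -
      have "(\<Sum>q\<in>A. \<Sum>g\<in>G. chi g p * chi g q) = (\<Sum>g\<in>G. chi g p * chi g p) + (\<Sum>q\<in>A - {p}. \<Sum>g\<in>G. chi g p * chi g q)"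
        using finA p by (simp add: sum.remove)
      also have "(\<Sum>g\<in>G. chi g p * chi g p) = K / N" using p A(1) by (auto simp: chi01 S1)
      also have "(\<Sum>q\<in>A - {p}. \<Sum>g\<in>G. chi g p * chi g q) \<le> real (card (A - {p})) * (C * K / (real N)^2)"
      proof (rule sum_bounded_above)
        fix q assume "q \<in> A - {p}"
        then show "(\<Sum>g\<in>G. chi g p * chi g q) \<le> C * K / (real N)^2"
        proof -
          have "p \<in> {1..n} \<times> {1..N}" "q \<in> {1..n} \<times> {1..N}" "p \<noteq> q"
            using p A(1) \<open>q \<in> A - {p}\<close> by auto
          from S2[OF this] show ?thesis .
        qed
      qed
      also have "\<dots> \<le> real m * (C * K / (real N)^2)"
        using A(2) finA C_pos Kpos by (intro mult_right_mono) (auto simp: card_Diff_subset_Int)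
      finally show ?thesis by simp
    qed
    have "(\<Sum>g\<in>G. \<Sum>p\<in>A. \<Sum>q\<in>A. chi g p * chi g q * w p) = (\<Sum>p\<in>A. w p * (\<Sum>q\<in>A. \<Sum>g\<in>G. chi g p * chi g q))"
    proof -
      have "(\<Sum>g\<in>G. \<Sum>p\<in>A. \<Sum>q\<in>A. chi g p * chi g q * w p) = (\<Sum>p\<in>A. \<Sum>g\<in>G. \<Sum>q\<in>A. chi g p * chi g q * w p)"
        by (rule sum.swap)
      also have "\<dots> = (\<Sum>p\<in>A. \<Sum>q\<in>A. \<Sum>g\<in>G. chi g p * chi g q * w p)"
        by (intro sum.cong refl) (rule sum.swap)
      also have "\<dots> = (\<Sum>p\<in>A. w p * (\<Sum>q\<in>A. \<Sum>g\<in>G. chi g p * chi g q))"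
        by (simp add: sum_distrib_left sum_distrib_right mult.commute mult.left_commute)
      finally show ?thesis .
    qed
    also have "\<dots> \<le> (\<Sum>p\<in>A. w p * (K / N + real m * (C * K / (real N)^2)))"
      by (intro sum_mono mult_left_mono per) (auto simp: w_def)
    also have "\<dots> = S * (K / N + real m * (C * K / (real N)^2))" using A(3) by (simp only: sum_distrib_right[symmetric])
    also have "\<dots> = K * S * (1 + real l * C) / N" using Npos by (simp add: m_def field_simps power2_eq_square)
    finally show ?thesis .
  qed
  have low: "(1 / (2^5 * (1 + 2 * C)^2)) / real N * S \<le> (\<Sum>g\<in>G. T g) / K"
  proof -
    have "(\<Sum>g\<in>G. \<alpha> * Y g - \<alpha>^2 / (4 * real l) * (\<Sum>p\<in>A. \<Sum>q\<in>A. chi g p * chi g q * w p)) \<le> (\<Sum>g\<in>G. T g)"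
      by (intro sum_mono Tlow)
    moreover have "(\<Sum>g\<in>G. \<alpha> * Y g - \<alpha>^2 / (4 * real l) * (\<Sum>p\<in>A. \<Sum>q\<in>A. chi g p * chi g q * w p))
        = \<alpha> * (K * S / N) - \<alpha>^2 / (4 * real l) * (\<Sum>g\<in>G. \<Sum>p\<in>A. \<Sum>q\<in>A. chi g p * chi g q * w p)"
      by (simp only: sum_subtractf sum_distrib_left[symmetric] sumY)
    moreover have "\<alpha>^2 / (4 * real l) * (\<Sum>g\<in>G. \<Sum>p\<in>A. \<Sum>q\<in>A. chi g p * chi g q * w p)
        \<le> \<alpha>^2 / (4 * real l) * (K * S * (1 + real l * C) / N)"
      using sumQ l_range by (intro mult_left_mono) auto
    moreover have "K * S / N * (\<alpha> - \<alpha>^2 * (1 + real l * C) / (4 * real l))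
        = \<alpha> * (K * S / N) - \<alpha>^2 / (4 * real l) * (K * S * (1 + real l * C) / N)"
      using l_range Npos by (simp add: field_simps)
    ultimately have "K * S / N * (\<alpha> - \<alpha>^2 * (1 + real l * C) / (4 * real l)) \<le> (\<Sum>g\<in>G. T g)"
      by linarith
    moreover have "1 / (2^5 * (1 + 2 * C)^2) \<le> \<alpha> - \<alpha>^2 * (1 + real l * C) / (4 * real l)"
      unfolding \<alpha>_def using final_const[of C "real l"] C_pos l_range by simp
    ultimately have "K * S / N * (1 / (2^5 * (1 + 2 * C)^2)) \<le> (\<Sum>g\<in>G. T g)"
      using S0 Kpos Npos by (smt (verit) divide_nonneg_nonneg mult_left_mono mult_nonneg_nonneg)
    then show ?thesis using Kpos by (simp add: field_simps)
  qed
  show ?thesis using low upper unfolding avgT S_def by simp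
qed

end
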